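(* Let $P$ be a finite poset and let $x \in P$ be a $\chi$-point of $P$, i.e. $\chi(P_{>x}) = 1$ where $P_{>x} = \{y \in P \mid y > x\}$. If $h, h' : P \to \mathbb{Z}$ are two functions with $h(y) = h'(y)$ for every $y \in P$ with $y \neq x$, then \[ \int_{P} h \, d\chi = \int_{P} h' \, d\chi . \]
   Context: For a finite poset $P$, the zeta function is the $P \times P$ matrix with $\zeta(x,y)=1$ if $x \le y$ and $0$ otherwise; it is invertible, and the Euler characteristic of $P$ is $\chi(P) = \sum_{x,y \in P} \zeta^{-1}(x,y)$ (this equals the Euler characteristic of the order complex of $P$; $\chi(\emptyset)=0$). A filter of $P$ is a subset $Q$ closed upward ($x \in Q$, $x \le y$ implies $y \in Q$). For a subset $Q$, $\delta_Q : P \to \mathbb{Z}$ is its indicator function. Every function $f : P \to \mathbb{Z}$ can be written as $f = \sum_i a_i \delta_{Q_i}$ with $a_i \in \mathbb{Z}$ and $Q_i$ filters of $P$; the Euler calculus (Euler integral) of $f$ is $\int_P f\, d\chi = \sum_i a_i \chi(Q_i)$, which is independent of the chosen representation. A point $x$ of $P$ is a $\chi$-point if $\chi(P_{>x}) = 1$. *)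

theory Defs
  imports Main
begin

text \<open>A finite poset is modelled as a finite carrier set P of a type with a partial order;
 subsets carry the induced order.\<close>

definition zeta :: "'a::order \<Rightarrow> 'a \<Rightarrow> int" where
  "zeta x y = (if x \<le> y then 1 else 0)"

definition zeta_inv :: "'a::order set \<Rightarrow> 'a \<Rightarrow> 'a \<Rightarrow> int" where
  "zeta_inv Q = (THE m.
      (\<forall>x\<in>Q. \<forall>y\<in>Q. (\<Sum>z\<in>Q. zeta x z * m z y) = (if x = y then 1 else 0)) \<and>
      (\<forall>x\<in>Q. \<forall>y\<in>Q. (\<Sum>z\<in>Q. m x z * zeta z y) = (if x = y then 1 else 0)) \<and>
      (\<forall>x y. (x \<notin> Q \<or> y \<notin> Q) \<longrightarrow> m x y = 0))"

definition euler_char :: "'a::order set \<Rightarrow> int" where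
  "euler_char Q = (\<Sum>x\<in>Q. \<Sum>y\<in>Q. zeta_inv Q x y)"

definition is_filter :: "'a::order set \<Rightarrow> 'a set \<Rightarrow> bool" where
  "is_filter P Q \<longleftrightarrow> Q \<subseteq> P \<and> (\<forall>x\<in>Q. \<forall>y\<in>P. x \<le> y \<longrightarrow> y \<in> Q)"

definition delta :: "'a set \<Rightarrow> 'a \<Rightarrow> int" where
  "delta Q y = (if y \<in> Q then 1 else 0)"

definition euler_integral :: "'a::order set \<Rightarrow> ('a \<Rightarrow> int) \<Rightarrow> int" where
  "euler_integral P f = (THE c. \<exists>rep :: (int \<times> 'a set) list.
      (\<forall>(a, Q)\<in>set rep. is_filter P Q) \<and>
      (\<forall>y\<in>P. f y = (\<Sum>(a, Q)\<leftarrow>rep. a * delta Q y)) \<and>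
      c = (\<Sum>(a, Q)\<leftarrow>rep. a * euler_char Q))"

end

theory Submission
  imports Defs
begin

lemma right_solve:
  fixes Q :: "'a::order set" and b :: "'a \<Rightarrow> int"
  assumes "finite Q"
  shows "\<exists>g. \<forall>x\<in>Q. (\<Sum>z\<in>Q. zeta x z * g z) = b x"
  using assms
proof (induction Q rule: finite_remove_induct)
  case empty
  then show ?case by simp
next
  case (remove A)
  obtain a where a: "a \<in> A" and amin: "\<forall>c\<in>A. c \<le> a \<longrightarrow> a = c"
    using finite_has_minimal[OF remove(1) remove(2)] by blast
  obtain g where g: "\<forall>x\<in>A - {a}. (\<Sum>z\<in>A - {a}. zeta x z * g z) = b x"
    using remove(4)[OF a] by blast
  define g' where "g' = g(a := b a - (\<Sum>z\<in>A - {a}. zeta a z * g z))"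
  have split: "(\<Sum>z\<in>A. zeta x z * g' z) = zeta x a * g' a + (\<Sum>z\<in>A - {a}. zeta x z * g z)" for x
  proof -
    have "(\<Sum>z\<in>A. zeta x z * g' z) = zeta x a * g' a + (\<Sum>z\<in>A - {a}. zeta x z * g' z)"
      using remove(1) a by (simp add: sum.remove)
    moreover have "(\<Sum>z\<in>A - {a}. zeta x z * g' z) = (\<Sum>z\<in>A - {a}. zeta x z * g z)"
      by (rule sum.cong) (auto simp: g'_def)
    ultimately show ?thesis by simp
  qed
  have "\<forall>x\<in>A. (\<Sum>z\<in>A. zeta x z * g' z) = b x"
  proof
    fix x assume x: "x \<in> A"
    show "(\<Sum>z\<in>A. zeta x z * g' z) = b x"
    proof (cases "x = a")
      case True
      then show ?thesis unfolding split by (simp add: zeta_def g'_def)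
    next
      case False
      have "zeta x a = 0" using amin x False by (auto simp: zeta_def)
      then show ?thesis unfolding split using g x False by simp
    qed
  qed
  then show ?case by blast
qed

lemma left_solve:
  fixes Q :: "'a::order set" and b :: "'a \<Rightarrow> int"
  assumes "finite Q"
  shows "\<exists>g. \<forall>y\<in>Q. (\<Sum>z\<in>Q. g z * zeta z y) = b y"
  using assms
proof (induction Q rule: finite_remove_induct)
  case empty
  then show ?case by simp
next
  case (remove A)
  obtain a where a: "a \<in> A" and amax: "\<forall>c\<in>A. a \<le> c \<longrightarrow> a = c"
    using finite_has_maximal[OF remove(1) remove(2)] by blast
  obtain g where g: "\<forall>x\<in>A - {a}. (\<Sum>z\<in>A - {a}. g z * zeta z x) = b x"
    using remove(4)[OF a] by blast
  define g' where "g' = g(a := b a - (\<Sum>z\<in>A - {a}. g z * zeta z a))"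
  have split: "(\<Sum>z\<in>A. g' z * zeta z x) = g' a * zeta a x + (\<Sum>z\<in>A - {a}. g z * zeta z x)" for x
  proof -
    have "(\<Sum>z\<in>A. g' z * zeta z x) = g' a * zeta a x + (\<Sum>z\<in>A - {a}. g' z * zeta z x)"
      using remove(1) a by (simp add: sum.remove)
    moreover have "(\<Sum>z\<in>A - {a}. g' z * zeta z x) = (\<Sum>z\<in>A - {a}. g z * zeta z x)"
      by (rule sum.cong) (auto simp: g'_def)
    ultimately show ?thesis by simp
  qed
  have "\<forall>x\<in>A. (\<Sum>z\<in>A. g' z * zeta z x) = b x"
  proof
    fix x assume x: "x \<in> A"
    show "(\<Sum>z\<in>A. g' z * zeta z x) = b x"
    proof (cases "x = a")
      case True
      then show ?thesis unfolding split by (simp add: zeta_def g'_def)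
    next
      case False
      have "zeta a x = 0" using amax x False by (auto simp: zeta_def)
      then show ?thesis unfolding split using g x False by simp
    qed
  qed
  then show ?case by blast
qed

definition invprop :: "'a::order set \<Rightarrow> ('a \<Rightarrow> 'a \<Rightarrow> int) \<Rightarrow> bool" where
  "invprop Q m \<longleftrightarrow>
      (\<forall>x\<in>Q. \<forall>y\<in>Q. (\<Sum>z\<in>Q. zeta x z * m z y) = (if x = y then 1 else 0)) \<and>
      (\<forall>x\<in>Q. \<forall>y\<in>Q. (\<Sum>z\<in>Q. m x z * zeta z y) = (if x = y then 1 else 0)) \<and>
      (\<forall>x y. (x \<notin> Q \<or> y \<notin> Q) \<longrightarrow> m x y = 0)"

lemma assoc_eq:
  fixes Q :: "'a::order set"
  assumes "finite Q"
    and r: "\<forall>x\<in>Q. \<forall>y\<in>Q. (\<Sum>z\<in>Q. zeta x z * m1 z y) = (if x = y then 1 else 0)"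
    and l: "\<forall>x\<in>Q. \<forall>y\<in>Q. (\<Sum>z\<in>Q. m2 x z * zeta z y) = (if x = y then 1 else 0)"
    and x: "x \<in> Q" and y: "y \<in> Q"
  shows "m1 x y = m2 x y"
proof -
  have "m2 x y = (\<Sum>w\<in>Q. m2 x w * (if w = y then 1 else 0))"
    using assms(1) y by (simp add: if_distrib sum.delta cong: if_cong)
  also have "\<dots> = (\<Sum>w\<in>Q. m2 x w * (\<Sum>z\<in>Q. zeta w z * m1 z y))"
    using r y by (intro sum.cong) auto
  also have "\<dots> = (\<Sum>w\<in>Q. \<Sum>z\<in>Q. m2 x w * zeta w z * m1 z y)"
    by (simp add: sum_distrib_left mult.assoc)
  also have "\<dots> = (\<Sum>z\<in>Q. \<Sum>w\<in>Q. m2 x w * zeta w z * m1 z y)"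
    by (rule sum.swap)
  also have "\<dots> = (\<Sum>z\<in>Q. (\<Sum>w\<in>Q. m2 x w * zeta w z) * m1 z y)"
    by (simp add: sum_distrib_right)
  also have "\<dots> = (\<Sum>z\<in>Q. (if x = z then 1 else 0) * m1 z y)"
    using l x by (intro sum.cong) auto
  also have "\<dots> = (\<Sum>z\<in>Q. if x = z then m1 z y else 0)"
    by (intro sum.cong) auto
  also have "\<dots> = m1 x y"
    using assms(1) x by simp
  finally show ?thesis by simp
qed

lemma invprop_ex1:
  fixes Q :: "'a::order set"
  assumes "finite Q"
  shows "\<exists>!m. invprop Q m"
proof -
  have "\<forall>y. \<exists>g. \<forall>x\<in>Q. (\<Sum>z\<in>Q. zeta x z * g z) = (if x = y then 1 else 0)"
    by (intro allI right_solve[OF assms])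
  then obtain G where G: "\<And>y x. x \<in> Q \<Longrightarrow> (\<Sum>z\<in>Q. zeta x z * G y z) = (if x = y then 1 else 0)"
    by metis
  have "\<forall>x. \<exists>g. \<forall>y\<in>Q. (\<Sum>z\<in>Q. g z * zeta z y) = (if x = y then 1 else 0)"
    by (intro allI left_solve[OF assms])
  then obtain H where H: "\<And>x y. y \<in> Q \<Longrightarrow> (\<Sum>z\<in>Q. H x z * zeta z y) = (if x = y then 1 else 0)"
    by metis
  define m1 where "m1 = (\<lambda>z y. if z \<in> Q \<and> y \<in> Q then G y z else 0)"
  define m2 where "m2 = (\<lambda>x z. if x \<in> Q \<and> z \<in> Q then H x z else 0)"
  have r: "\<forall>x\<in>Q. \<forall>y\<in>Q. (\<Sum>z\<in>Q. zeta x z * m1 z y) = (if x = y then 1 else 0)"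
  proof (intro ballI)
    fix x y assume "x \<in> Q" "y \<in> Q"
    then show "(\<Sum>z\<in>Q. zeta x z * m1 z y) = (if x = y then 1 else 0)"
      using G[of x y] by (simp add: m1_def)
  qed
  have l: "\<forall>x\<in>Q. \<forall>y\<in>Q. (\<Sum>z\<in>Q. m2 x z * zeta z y) = (if x = y then 1 else 0)"
  proof (intro ballI)
    fix x y assume "x \<in> Q" "y \<in> Q"
    then show "(\<Sum>z\<in>Q. m2 x z * zeta z y) = (if x = y then 1 else 0)"
      using H[of y x] by (simp add: m2_def)
  qed
  have eq: "m1 = m2"
  proof (intro ext)
    fix x y
    show "m1 x y = m2 x y"
    proof (cases "x \<in> Q \<and> y \<in> Q")
      case True
      then show ?thesis using assoc_eq[OF assms r l] by blast
    next
      case False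
      then show ?thesis by (auto simp: m1_def m2_def)
    qed
  qed
  have "invprop Q m1"
    unfolding invprop_def using r l eq by (auto simp: m1_def)
  moreover have "m = m1" if "invprop Q m" for m
  proof (intro ext)
    fix x y
    show "m x y = m1 x y"
    proof (cases "x \<in> Q \<and> y \<in> Q")
      case True
      then show ?thesis using assoc_eq[OF assms _ l, of m] that unfolding invprop_def eq
        by auto
    next
      case False
      then show ?thesis using that by (auto simp: m1_def invprop_def)
    qed
  qed
  ultimately show ?thesis by blast
qed

lemma zeta_inv_prop:
  fixes Q :: "'a::order set"
  assumes "finite Q"
  shows "invprop Q (zeta_inv Q)"
proof -
  have "zeta_inv Q = (THE m. invprop Q m)"
    unfolding zeta_inv_def invprop_def by simp
  then show ?thesis using theI'[OF invprop_ex1[OF assms]] by simp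
qed

lemma euler_cone:
  fixes Q :: "'a::order set"
  assumes "finite Q" and "x \<in> Q" and "\<forall>z\<in>Q. x \<le> z"
  shows "euler_char Q = 1"
proof -
  have r: "\<forall>u\<in>Q. \<forall>v\<in>Q. (\<Sum>z\<in>Q. zeta u z * zeta_inv Q z v) = (if u = v then 1 else 0)"
    using zeta_inv_prop[OF assms(1)] unfolding invprop_def by blast
  have "\<forall>v\<in>Q. (\<Sum>z\<in>Q. zeta_inv Q z v) = (if x = v then 1 else 0)"
  proof
    fix v assume v: "v \<in> Q"
    have "(\<Sum>z\<in>Q. zeta_inv Q z v) = (\<Sum>z\<in>Q. zeta x z * zeta_inv Q z v)"
      using assms(3) by (intro sum.cong) (auto simp: zeta_def)
    then show "(\<Sum>z\<in>Q. zeta_inv Q z v) = (if x = v then 1 else 0)"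
      using r assms(2) v by simp
  qed
  then have "euler_char Q = (\<Sum>v\<in>Q. (if x = v then 1 else 0))"
    unfolding euler_char_def by (subst sum.swap) (intro sum.cong, auto)
  also have "\<dots> = 1" using assms(1,2) by simp
  finally show ?thesis .
qed

lemma shift_rep:
  fixes P :: "'a::order set" and x :: 'a and h h' :: "'a \<Rightarrow> int"
  assumes "finite P"
    and "x \<in> P"
    and chi: "euler_char {y \<in> P. x < y} = 1"
    and eq: "\<forall>y\<in>P. y \<noteq> x \<longrightarrow> h y = h' y"
    and S: "\<exists>rep :: (int \<times> 'a set) list.
      (\<forall>(a, Q)\<in>set rep. is_filter P Q) \<and>
      (\<forall>y\<in>P. h y = (\<Sum>(a, Q)\<leftarrow>rep. a * delta Q y)) \<and>
      c = (\<Sum>(a, Q)\<leftarrow>rep. a * euler_char Q)"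
  shows "\<exists>rep :: (int \<times> 'a set) list.
      (\<forall>(a, Q)\<in>set rep. is_filter P Q) \<and>
      (\<forall>y\<in>P. h' y = (\<Sum>(a, Q)\<leftarrow>rep. a * delta Q y)) \<and>
      c = (\<Sum>(a, Q)\<leftarrow>rep. a * euler_char Q)"
proof -
  obtain rep :: "(int \<times> 'a set) list" where
    f: "\<forall>(a, Q)\<in>set rep. is_filter P Q" and
    r: "\<forall>y\<in>P. h y = (\<Sum>(a, Q)\<leftarrow>rep. a * delta Q y)" and
    c: "c = (\<Sum>(a, Q)\<leftarrow>rep. a * euler_char Q)"
    using S by blast
  define d where "d = h' x - h x"
  define A where "A = {y \<in> P. x \<le> y}"
  define B where "B = {y \<in> P. x < y}"
  define rep' where "rep' = rep @ [(d, A), (- d, B)]"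
  have chiA: "euler_char A = 1"
    unfolding A_def by (rule euler_cone) (use assms in auto)
  have fA: "is_filter P A" unfolding is_filter_def A_def by (auto intro: order_trans)
  have fB: "is_filter P B" unfolding is_filter_def B_def by (auto intro: less_le_trans)
  have "\<forall>(a, Q)\<in>set rep'. is_filter P Q"
    using f fA fB by (auto simp: rep'_def)
  moreover have "\<forall>y\<in>P. h' y = (\<Sum>(a, Q)\<leftarrow>rep'. a * delta Q y)"
  proof
    fix y assume y: "y \<in> P"
    have "(\<Sum>(a, Q)\<leftarrow>rep'. a * delta Q y) = h y + d * delta A y - d * delta B y"
      using r y by (simp add: rep'_def)
    also have "\<dots> = h' y"
      using eq y by (cases "y = x") (auto simp: d_def delta_def A_def B_def less_le)
    finally show "h' y = (\<Sum>(a, Q)\<leftarrow>rep'. a * delta Q y)" by simp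
  qed
  moreover have "c = (\<Sum>(a, Q)\<leftarrow>rep'. a * euler_char Q)"
    using c chiA chi by (simp add: rep'_def B_def)
  ultimately show ?thesis by blast
qed

theorem proposition4p1:
  fixes P :: "'a::order set" and x :: 'a and h h' :: "'a \<Rightarrow> int"
  assumes "finite P"
    and "x \<in> P"
    and "euler_char {y \<in> P. x < y} = 1"
    and "\<forall>y\<in>P. y \<noteq> x \<longrightarrow> h y = h' y"
  shows "euler_integral P h = euler_integral P h'"
proof -
  have sym: "\<forall>y\<in>P. y \<noteq> x \<longrightarrow> h' y = h y" using assms(4) by auto
  show ?thesis
    unfolding euler_integral_def
    apply (rule arg_cong[where f = The])
    apply (rule ext)
    apply (rule iffI)
     apply (erule shift_rep[OF assms(1,2,3,4), rotated -1])
    apply (erule shift_rep[OF assms(1,2,3) sym, rotated -1])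
    done
qed

end
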